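(* A regular Hausdorff space $X$ has a point-regular base if and only if $\mathcal{F}(X)$ has a point-regular base.
   Context: $\mathcal{F}(X)$ is the set of nonempty finite subsets of $X$ with the Vietoris topology (base: $\langle U_1,\dots,U_k\rangle=\{A: A\subset\bigcup_i U_i,\ A\cap U_j\neq\emptyset\ \forall j\}$, $U_i$ open in $X$). A base $\mathcal{B}$ of a space $Y$ is point-regular if for every $x\in Y$ and every neighborhood $U$ of $x$, only finitely many members of $\mathcal{B}$ contain $x$ and meet $Y\setminus U$. *)

theory Defs
  imports "HOL-Analysis.Analysis"
begin

definition is_base :: "'a topology \<Rightarrow> 'a set set \<Rightarrow> bool" where
  "is_base Y \<B> \<longleftrightarrow> (\<forall>B\<in>\<B>. openin Y B) \<and>
     (\<forall>U. openin Y U \<longrightarrow> (\<exists>\<V>. \<V> \<subseteq> \<B> \<and> \<Union>\<V> = U))"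

definition point_regular_base :: "'a topology \<Rightarrow> 'a set set \<Rightarrow> bool" where
  "point_regular_base Y \<B> \<longleftrightarrow> is_base Y \<B> \<and>
     (\<forall>x\<in>topspace Y. \<forall>U. openin Y U \<and> x \<in> U \<longrightarrow>
        finite {B\<in>\<B>. x \<in> B \<and> B \<inter> (topspace Y - U) \<noteq> {}})"

definition has_point_regular_base :: "'a topology \<Rightarrow> bool" where
  "has_point_regular_base Y \<longleftrightarrow> (\<exists>\<B>. point_regular_base Y \<B>)"

definition vietoris_basic :: "'a topology \<Rightarrow> 'a set set \<Rightarrow> 'a set set" where
  "vietoris_basic X \<U> = {A. finite A \<and> A \<noteq> {} \<and> A \<subseteq> topspace X \<and>
      A \<subseteq> \<Union>\<U> \<and> (\<forall>U\<in>\<U>. A \<inter> U \<noteq> {})}"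

text \<open>The hyperspace F(X) of nonempty finite subsets of X with the Vietoris topology,
generated by the sets \<langle>U_1,...,U_k\<rangle>, k \<ge> 1, U_i open in X.\<close>
definition finite_hyperspace :: "'a topology \<Rightarrow> 'a set topology" where
  "finite_hyperspace X = topology_generated_by
     {vietoris_basic X \<U> | \<U>. finite \<U> \<and> \<U> \<noteq> {} \<and> (\<forall>U\<in>\<U>. openin X U)}"

end

theory Submission
  imports Defs
begin

definition rk :: "'a set set \<Rightarrow> 'a set \<Rightarrow> nat" where
  "rk \<B> B = card {C\<in>\<B>. B \<subset> C}"

definition lev :: "'a set set \<Rightarrow> 'a set \<Rightarrow> nat \<Rightarrow> bool" where
  "lev \<B> B l \<longleftrightarrow> l \<le> rk \<B> B \<and> (\<forall>C\<in>\<B>. B \<subset> C \<longrightarrow> rk \<B> C < l)"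

lemma PR_open: "point_regular_base X \<B> \<Longrightarrow> B \<in> \<B> \<Longrightarrow> openin X B"
  by (auto simp: point_regular_base_def is_base_def)

lemma PR_base:
  assumes "point_regular_base X \<B>" "openin X U" "x \<in> U"
  shows "\<exists>B\<in>\<B>. x \<in> B \<and> B \<subseteq> U"
proof -
  obtain \<V> where "\<V> \<subseteq> \<B>" "\<Union>\<V> = U"
    using assms unfolding point_regular_base_def is_base_def by blast
  then show ?thesis using assms(3) by blast
qed

lemma PR_fin:
  assumes "point_regular_base X \<B>" "openin X U" "x \<in> U"
  shows "finite {B\<in>\<B>. x \<in> B \<and> \<not> B \<subseteq> U}"
proof -
  have x: "x \<in> topspace X" using assms openin_subset by blast
  have "finite {B\<in>\<B>. x \<in> B \<and> B \<inter> (topspace X - U) \<noteq> {}}"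
    using assms x unfolding point_regular_base_def by blast
  moreover have "{B\<in>\<B>. x \<in> B \<and> \<not> B \<subseteq> U} \<subseteq> {B\<in>\<B>. x \<in> B \<and> B \<inter> (topspace X - U) \<noteq> {}}"
    using PR_open[OF assms(1)] openin_subset by fastforce
  ultimately show ?thesis by (rule finite_subset[rotated])
qed

lemma S_fin:
  assumes "point_regular_base X \<B>" "B \<in> \<B>" "x \<in> B"
  shows "finite {C\<in>\<B>. B \<subset> C}"
proof -
  have "finite {C\<in>\<B>. x \<in> C \<and> \<not> C \<subseteq> B}"
    using PR_fin[OF assms(1) PR_open[OF assms(1,2)] assms(3)] .
  then show ?thesis by (rule finite_subset[rotated]) (use assms(3) in auto)
qed

lemma rk_less:
  assumes "point_regular_base X \<B>" "B \<in> \<B>" "C \<in> \<B>" "x \<in> B" "B \<subset> C"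
  shows "rk \<B> C < rk \<B> B"
  unfolding rk_def
proof (rule psubset_card_mono)
  show "finite {C\<in>\<B>. B \<subset> C}" using S_fin[OF assms(1,2,4)] .
  show "{D\<in>\<B>. C \<subset> D} \<subset> {C\<in>\<B>. B \<subset> C}" using assms(3,5) by auto
qed

lemma below:
  assumes "point_regular_base X \<B>" "infinite F" "F \<subseteq> {B\<in>\<B>. x \<in> B}"
    "finite G" "G \<subseteq> {B\<in>\<B>. x \<in> B}"
  shows "\<exists>D\<in>F. \<forall>g\<in>G. D \<subset> g"
proof -
  let ?E = "(\<Union>g\<in>G. {B\<in>\<B>. x \<in> B \<and> \<not> B \<subseteq> g}) \<union> G"
  have "finite ?E" using assms(4) PR_fin[OF assms(1) PR_open[OF assms(1)]] assms(5) by auto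
  then have "infinite (F - ?E)" using assms(2) by (rule Diff_infinite_finite)
  then have "F - ?E \<noteq> {}" by (metis finite.emptyI)
  then obtain D where D: "D \<in> F" "D \<notin> ?E" by blast
  then show ?thesis using assms(3) by (intro bexI[of _ D]) auto
qed

lemma fin_rk:
  assumes "point_regular_base X \<B>"
  shows "finite {B\<in>\<B>. x \<in> B \<and> rk \<B> B \<le> n}"
proof (rule ccontr)
  let ?F = "{B\<in>\<B>. x \<in> B \<and> rk \<B> B \<le> n}"
  assume inf: "infinite ?F"
  then obtain G where G: "G \<subseteq> ?F" "finite G" "card G = Suc n"
    using infinite_arbitrarily_large[OF inf, of "Suc n"] by blast
  have "\<exists>D\<in>?F. \<forall>g\<in>G. D \<subset> g" by (rule below[OF assms inf, where x=x and G=G]) (use G in auto)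
  then obtain D where D: "D \<in> ?F" "\<forall>g\<in>G. D \<subset> g" by blast
  have "G \<subseteq> {C\<in>\<B>. D \<subset> C}" using G D by auto
  moreover have "finite {C\<in>\<B>. D \<subset> C}" using S_fin[OF assms, of D x] D by auto
  ultimately have "card G \<le> rk \<B> D" unfolding rk_def by (rule card_mono[rotated])
  then show False using D G by auto
qed

lemma fin_lev:
  assumes "point_regular_base X \<B>"
  shows "finite {B\<in>\<B>. x \<in> B \<and> (\<forall>C\<in>\<B>. B \<subset> C \<longrightarrow> rk \<B> C < n)}"
proof (rule ccontr)
  define F where "F = {B\<in>\<B>. x \<in> B \<and> (\<forall>C\<in>\<B>. B \<subset> C \<longrightarrow> rk \<B> C < n)}"
  have Fs: "F \<subseteq> {B\<in>\<B>. x \<in> B}" unfolding F_def by blast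
  assume "infinite {B\<in>\<B>. x \<in> B \<and> (\<forall>C\<in>\<B>. B \<subset> C \<longrightarrow> rk \<B> C < n)}"
  then have inf: "infinite F" unfolding F_def .
  obtain G where G: "finite G" "card G = n" "G \<subseteq> F"
    using infinite_arbitrarily_large[OF inf, of n] by blast
  have "\<exists>E\<in>F. \<forall>g\<in>G. E \<subset> g" by (rule below[OF assms inf Fs G(1)]) (use G(3) Fs in blast)
  then obtain E where E: "E \<in> F" "\<forall>g\<in>G. E \<subset> g" by blast
  have EB: "E \<in> \<B>" "x \<in> E" using E(1) Fs by blast+
  have "\<exists>D\<in>F. \<forall>g\<in>{E}. D \<subset> g" by (rule below[OF assms inf Fs]) (use EB in blast)+
  then obtain D where D: "D \<in> F" "D \<subset> E" by blast
  have "G \<subseteq> {C\<in>\<B>. E \<subset> C}" using G(3) Fs E(2) by blast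
  moreover have "finite {C\<in>\<B>. E \<subset> C}" using S_fin[OF assms EB] .
  ultimately have "card G \<le> rk \<B> E" unfolding rk_def by (rule card_mono[rotated])
  moreover have "rk \<B> E < n" using D EB(1) unfolding F_def by blast
  ultimately show False using G by simp
qed

lemma inf_Bx:
  assumes pr: "point_regular_base X \<B>" and H: "Hausdorff_space X" and x: "x \<in> topspace X"
    and ni: "\<not> openin X {x}"
  shows "infinite {B\<in>\<B>. x \<in> B}"
proof
  define F where "F = {B\<in>\<B>. x \<in> B}"
  assume "finite {B\<in>\<B>. x \<in> B}"
  then have fin: "finite F" unfolding F_def .
  obtain B0 where B0: "B0 \<in> \<B>" "x \<in> B0" using PR_base[OF pr openin_topspace x] by blast
  then have B0F: "B0 \<in> F" unfolding F_def by blast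
  then have ne: "F \<noteq> {}" by blast
  have FB: "F \<subseteq> \<B>" unfolding F_def by blast
  have "\<forall>B\<in>F. openin X B" using FB PR_open[OF pr] by blast
  then have op: "openin X (\<Inter>F)" using fin ne by (intro openin_Inter) auto
  have xF: "x \<in> \<Inter>F" unfolding F_def by blast
  have "\<Inter>F \<noteq> {x}"
  proof
    assume "\<Inter>F = {x}"
    then show False using op ni by simp
  qed
  then obtain y where y: "y \<in> \<Inter>F" "y \<noteq> x" using xF by blast
  have "y \<in> B0" using y B0F by blast
  then have "y \<in> topspace X" using PR_open[OF pr B0(1)] openin_subset by blast
  then have "closedin X {y}" by (rule closedin_t1_singleton[OF Hausdorff_imp_t1_space[OF H]])
  then have o2: "openin X (\<Inter>F - {y})" using op by (intro openin_diff)
  have x2: "x \<in> \<Inter>F - {y}" using xF y by blast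
  obtain B where B: "B \<in> \<B>" "x \<in> B" "B \<subseteq> \<Inter>F - {y}"
    using PR_base[OF pr o2 x2] by blast
  then have "B \<in> F" unfolding F_def by blast
  then have "y \<in> B" using y by blast
  then show False using B by blast
qed

lemma exist_lev:
  assumes pr: "point_regular_base X \<B>" and H: "Hausdorff_space X"
    and U: "openin X U" "x \<in> U" and ni: "\<not> openin X {x}"
  shows "\<exists>n0. \<forall>l\<ge>n0. \<exists>B\<in>\<B>. x \<in> B \<and> B \<subseteq> U \<and> lev \<B> B l"
proof -
  let ?Bad = "{B\<in>\<B>. x \<in> B \<and> \<not> B \<subseteq> U}"
  have "finite ?Bad" using PR_fin[OF pr U] .
  then have "finite (rk \<B> ` ?Bad)" by simp
  then obtain n0 where n0: "\<forall>k\<in>rk \<B> ` ?Bad. k < n0" using finite_nat_set_iff_bounded by blast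
  have x: "x \<in> topspace X" using U openin_subset by blast
  show ?thesis
  proof (intro exI allI impI)
    fix l assume l: "n0 \<le> l"
    have "infinite ({B\<in>\<B>. x \<in> B} - {B\<in>\<B>. x \<in> B \<and> rk \<B> B \<le> l})"
      using Diff_infinite_finite[OF fin_rk[OF pr] inf_Bx[OF pr H x ni]] .
    then have "{B\<in>\<B>. x \<in> B} - {B\<in>\<B>. x \<in> B \<and> rk \<B> B \<le> l} \<noteq> {}" by (metis finite.emptyI)
    then obtain B where B: "B \<in> \<B>" "x \<in> B" "\<not> rk \<B> B \<le> l" by blast
    then have B: "B \<in> \<B>" "x \<in> B" "l \<le> rk \<B> B" by auto
    let ?T = "\<lambda>C. C \<in> \<B> \<and> B \<subseteq> C \<and> l \<le> rk \<B> C"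
    have "?T B" using B by auto
    then obtain C where C: "?T C" "\<forall>D. ?T D \<longrightarrow> rk \<B> C \<le> rk \<B> D"
      using ex_has_least_nat[of ?T B "rk \<B>"] by blast
    have xC: "x \<in> C" using C B by auto
    have lv: "lev \<B> C l" unfolding lev_def
    proof (intro conjI ballI impI)
      show "l \<le> rk \<B> C" using C by auto
      fix D assume D: "D \<in> \<B>" "C \<subset> D"
      show "rk \<B> D < l"
      proof (rule ccontr)
        assume "\<not> rk \<B> D < l"
        then have "?T D" using D C by auto
        then have "rk \<B> C \<le> rk \<B> D" using C by auto
        moreover have "rk \<B> D < rk \<B> C" using rk_less[OF pr _ D(1) xC D(2)] C by auto
        ultimately show False by simp
      qed
    qed
    have "C \<subseteq> U"
    proof (rule ccontr)
      assume "\<not> C \<subseteq> U"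
      then have "C \<in> ?Bad" using C xC by auto
      then have "rk \<B> C < n0" using n0 by auto
      then show False using C l by auto
    qed
    then show "\<exists>B\<in>\<B>. x \<in> B \<and> B \<subseteq> U \<and> lev \<B> B l" using C xC lv by auto
  qed
qed

lemma singleton_in:
  assumes "point_regular_base X \<B>" "openin X {x}"
  shows "{x} \<in> \<B>"
proof -
  obtain B where "B \<in> \<B>" "x \<in> B" "B \<subseteq> {x}" using PR_base[OF assms] by blast
  then have "B = {x}" by blast
  then show ?thesis using \<open>B \<in> \<B>\<close> by simp
qed

lemma FH_topspace:
  "topspace (finite_hyperspace X) = \<Union>{vietoris_basic X \<U> | \<U>. finite \<U> \<and> \<U> \<noteq> {} \<and> (\<forall>U\<in>\<U>. openin X U)}"
  unfolding finite_hyperspace_def by (rule topology_generated_by_topspace)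

lemma FH_topspace_sub:
  "A \<in> topspace (finite_hyperspace X) \<Longrightarrow> finite A \<and> A \<noteq> {} \<and> A \<subseteq> topspace X"
  by (auto simp: FH_topspace vietoris_basic_def)

lemma FH_single:
  assumes "x \<in> topspace X"
  shows "{x} \<in> topspace (finite_hyperspace X)"
proof -
  have "{x} \<in> vietoris_basic X {topspace X}" using assms by (auto simp: vietoris_basic_def)
  then show ?thesis unfolding FH_topspace
    by (intro UnionI[of "vietoris_basic X {topspace X}"]) auto
qed

lemma open_viet:
  assumes "finite \<U>" "\<U> \<noteq> {}" "\<forall>U\<in>\<U>. openin X U"
  shows "openin (finite_hyperspace X) (vietoris_basic X \<U>)"
  unfolding finite_hyperspace_def by (rule topology_generated_by_Basis) (use assms in blast)

lemma viet_mono: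
  "(\<forall>a\<in>A. B a \<subseteq> V a) \<Longrightarrow> vietoris_basic X (B ` A) \<subseteq> vietoris_basic X (V ` A)"
proof
  fix C assume a: "\<forall>a\<in>A. B a \<subseteq> V a" and C: "C \<in> vietoris_basic X (B ` A)"
  then have C1: "finite C" "C \<noteq> {}" "C \<subseteq> topspace X" "C \<subseteq> \<Union>(B ` A)" "\<forall>a\<in>A. C \<inter> B a \<noteq> {}"
    unfolding vietoris_basic_def by auto
  have "C \<subseteq> \<Union>(V ` A)" using C1(4) a by blast
  moreover have "\<forall>a\<in>A. C \<inter> V a \<noteq> {}" using C1(5) a by blast
  ultimately show "C \<in> vietoris_basic X (V ` A)" using C1 unfolding vietoris_basic_def by auto
qed

lemma gen_FH:
  assumes "openin (finite_hyperspace X) W"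
  shows "generate_topology_on {vietoris_basic X \<U> | \<U>. finite \<U> \<and> \<U> \<noteq> {} \<and> (\<forall>U\<in>\<U>. openin X U)} W"
  using assms unfolding finite_hyperspace_def by (rule openin_topology_generated_by)

lemma NB:
  assumes "openin (finite_hyperspace X) W"
  shows "\<forall>A\<in>W. \<exists>V. (\<forall>a\<in>A. openin X (V a) \<and> a \<in> V a) \<and> vietoris_basic X (V ` A) \<subseteq> W"
  using gen_FH[OF assms]
proof (induction rule: generate_topology_on.induct)
  case Empty
  then show ?case by simp
next
  case (Int P Q)
  show ?case
  proof
    fix A assume A: "A \<in> P \<inter> Q"
    obtain V1 where V1: "\<forall>a\<in>A. openin X (V1 a) \<and> a \<in> V1 a" "vietoris_basic X (V1 ` A) \<subseteq> P"
      using Int.IH(1) A by blast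
    obtain V2 where V2: "\<forall>a\<in>A. openin X (V2 a) \<and> a \<in> V2 a" "vietoris_basic X (V2 ` A) \<subseteq> Q"
      using Int.IH(2) A by blast
    let ?V = "\<lambda>x. V1 x \<inter> V2 x"
    have "vietoris_basic X (?V ` A) \<subseteq> vietoris_basic X (V1 ` A)" by (rule viet_mono) auto
    moreover have "vietoris_basic X (?V ` A) \<subseteq> vietoris_basic X (V2 ` A)" by (rule viet_mono) auto
    ultimately show "\<exists>V. (\<forall>a\<in>A. openin X (V a) \<and> a \<in> V a) \<and> vietoris_basic X (V ` A) \<subseteq> P \<inter> Q"
      using V1 V2 by (intro exI[of _ ?V]) auto
  qed
next
  case (UN K)
  show ?case
  proof
    fix A assume "A \<in> \<Union>K"
    then obtain k where k: "k \<in> K" "A \<in> k" by blast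
    obtain V where V: "\<forall>a\<in>A. openin X (V a) \<and> a \<in> V a" "vietoris_basic X (V ` A) \<subseteq> k"
      using UN.IH[OF k(1)] k(2) by blast
    have "vietoris_basic X (V ` A) \<subseteq> \<Union>K" using V(2) k(1) by blast
    then show "\<exists>V. (\<forall>a\<in>A. openin X (V a) \<and> a \<in> V a) \<and> vietoris_basic X (V ` A) \<subseteq> \<Union>K"
      using V(1) by blast
  qed
next
  case (Basis s)
  then obtain \<U> where s: "s = vietoris_basic X \<U>" "finite \<U>" "\<U> \<noteq> {}" "\<forall>U\<in>\<U>. openin X U"
    by blast
  show ?case
  proof
    fix A assume A: "A \<in> s"
    define V where "V a = \<Inter>(insert (topspace X) {U\<in>\<U>. a \<in> U})" for a
    have AU: "A \<subseteq> topspace X" "A \<subseteq> \<Union>\<U>" "\<forall>U\<in>\<U>. A \<inter> U \<noteq> {}"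
      using A s by (auto simp: vietoris_basic_def)
    have VU: "\<forall>a. \<forall>U\<in>\<U>. a \<in> U \<longrightarrow> V a \<subseteq> U" by (auto simp: V_def)
    have Vo: "\<forall>a\<in>A. openin X (V a) \<and> a \<in> V a"
    proof
      fix a assume "a \<in> A"
      have "openin X (V a)" unfolding V_def using s by (intro openin_Inter) auto
      moreover have "a \<in> V a" using \<open>a \<in> A\<close> AU by (auto simp: V_def)
      ultimately show "openin X (V a) \<and> a \<in> V a" by blast
    qed
    have "vietoris_basic X (V ` A) \<subseteq> s"
      unfolding s(1)
    proof
      fix C assume C: "C \<in> vietoris_basic X (V ` A)"
      have C1: "finite C" "C \<noteq> {}" "C \<subseteq> topspace X" "C \<subseteq> \<Union>(V ` A)" "\<forall>a\<in>A. C \<inter> V a \<noteq> {}"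
        using C by (auto simp: vietoris_basic_def)
      have "C \<subseteq> \<Union>\<U>"
      proof
        fix c assume "c \<in> C"
        then obtain a where a: "a \<in> A" "c \<in> V a" using C1 by blast
        then obtain U where "U \<in> \<U>" "a \<in> U" using AU by blast
        then show "c \<in> \<Union>\<U>" using VU a by blast
      qed
      moreover have "\<forall>U\<in>\<U>. C \<inter> U \<noteq> {}"
      proof
        fix U assume "U \<in> \<U>"
        then obtain a where "a \<in> A" "a \<in> U" using AU by blast
        then show "C \<inter> U \<noteq> {}" using C1 VU \<open>U \<in> \<U>\<close> by blast
      qed
      ultimately show "C \<in> vietoris_basic X \<U>" using C1 by (auto simp: vietoris_basic_def)
    qed
    then show "\<exists>V. (\<forall>a\<in>A. openin X (V a) \<and> a \<in> V a) \<and> vietoris_basic X (V ` A) \<subseteq> s"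
      using Vo by blast
  qed
qed

lemma pre_open:
  assumes "openin (finite_hyperspace X) W"
  shows "openin X {x\<in>topspace X. {x} \<in> W}"
  using gen_FH[OF assms]
proof (induction rule: generate_topology_on.induct)
  case Empty
  then show ?case by simp
next
  case (Int P Q)
  have "{x\<in>topspace X. {x} \<in> P \<inter> Q} = {x\<in>topspace X. {x} \<in> P} \<inter> {x\<in>topspace X. {x} \<in> Q}"
    by auto
  then show ?case using Int.IH by (simp add: openin_Int)
next
  case (UN K)
  have "{x\<in>topspace X. {x} \<in> \<Union>K} = \<Union>((\<lambda>k. {x\<in>topspace X. {x} \<in> k}) ` K)" by auto
  then show ?case using UN.IH by (auto intro: openin_Union)
next
  case (Basis s)
  then obtain \<U> where s: "s = vietoris_basic X \<U>" "finite \<U>" "\<U> \<noteq> {}" "\<forall>U\<in>\<U>. openin X U"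
    by blast
  have "{x\<in>topspace X. {x} \<in> s} = \<Inter>(insert (topspace X) \<U>)"
    using s(1,3) by (auto simp: vietoris_basic_def)
  moreover have "openin X (\<Inter>(insert (topspace X) \<U>))" using s by (intro openin_Inter) auto
  ultimately show ?case by simp
qed

lemma forward:
  assumes H: "Hausdorff_space X" and pr: "point_regular_base X \<B>"
  shows "has_point_regular_base (finite_hyperspace X)"
proof -
  define BB where "BB = {vietoris_basic X \<U> | \<U>. \<U> \<subseteq> \<B> \<and> finite \<U> \<and> \<U> \<noteq> {} \<and>
     (\<exists>l. \<forall>B\<in>\<U>. (\<exists>y. B = {y}) \<or> lev \<B> B l)}"
  have op: "\<forall>D\<in>BB. openin (finite_hyperspace X) D"
  proof
    fix D assume "D \<in> BB"
    then obtain \<U> where "D = vietoris_basic X \<U>" "\<U> \<subseteq> \<B>" "finite \<U>" "\<U> \<noteq> {}"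
      unfolding BB_def by blast
    then show "openin (finite_hyperspace X) D" using open_viet PR_open[OF pr] by blast
  qed
  have loc: "\<exists>D\<in>BB. A \<in> D \<and> D \<subseteq> W" if W: "openin (finite_hyperspace X) W" "A \<in> W" for W A
  proof -
    obtain V where V: "\<forall>a\<in>A. openin X (V a) \<and> a \<in> V a" "vietoris_basic X (V ` A) \<subseteq> W"
      using NB[OF W(1)] W(2) by blast
    have A: "finite A" "A \<noteq> {}" "A \<subseteq> topspace X"
      using FH_topspace_sub W openin_subset by blast+
    have "\<forall>a\<in>{a\<in>A. \<not> openin X {a}}. \<exists>n0. \<forall>l\<ge>n0. \<exists>B\<in>\<B>. a \<in> B \<and> B \<subseteq> V a \<and> lev \<B> B l"
      using exist_lev[OF pr H] V by blast
    then obtain n0 where n0: "\<forall>a\<in>{a\<in>A. \<not> openin X {a}}. \<forall>l\<ge>n0 a. \<exists>B\<in>\<B>. a \<in> B \<and> B \<subseteq> V a \<and> lev \<B> B l"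
      by metis
    define l where "l = (\<Sum>a\<in>A. n0 a)"
    have "\<forall>a\<in>{a\<in>A. \<not> openin X {a}}. \<exists>B\<in>\<B>. a \<in> B \<and> B \<subseteq> V a \<and> lev \<B> B l"
    proof
      fix a assume a: "a \<in> {a\<in>A. \<not> openin X {a}}"
      have "n0 a \<le> l" unfolding l_def using a A(1) by (intro member_le_sum) auto
      then show "\<exists>B\<in>\<B>. a \<in> B \<and> B \<subseteq> V a \<and> lev \<B> B l" using n0 a by blast
    qed
    then obtain Bf where Bf: "\<forall>a\<in>{a\<in>A. \<not> openin X {a}}. Bf a \<in> \<B> \<and> a \<in> Bf a \<and> Bf a \<subseteq> V a \<and> lev \<B> (Bf a) l"
      by metis
    define B where "B a = (if openin X {a} then {a} else Bf a)" for a
    have B: "\<forall>a\<in>A. B a \<in> \<B> \<and> a \<in> B a \<and> B a \<subseteq> V a \<and> ((\<exists>y. B a = {y}) \<or> lev \<B> (B a) l)"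
      using Bf singleton_in[OF pr] V(1) by (auto simp: B_def)
    have "vietoris_basic X (B ` A) \<in> BB" unfolding BB_def
      using B A by blast
    moreover have "A \<in> vietoris_basic X (B ` A)" using A B by (auto simp: vietoris_basic_def)
    moreover have "vietoris_basic X (B ` A) \<subseteq> W" using viet_mono[of A B V X] B V(2) by blast
    ultimately show ?thesis by blast
  qed
  have base: "is_base (finite_hyperspace X) BB"
    unfolding is_base_def
  proof (intro conjI allI impI)
    show "\<forall>B\<in>BB. openin (finite_hyperspace X) B" using op .
    fix W assume W: "openin (finite_hyperspace X) W"
    show "\<exists>\<V>. \<V> \<subseteq> BB \<and> \<Union>\<V> = W"
      by (rule exI[of _ "{D\<in>BB. D \<subseteq> W}"]) (use loc[OF W] in blast)
  qed
  have pt: "finite {D\<in>BB. A \<in> D \<and> D \<inter> (topspace (finite_hyperspace X) - W) \<noteq> {}}"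
    if AW: "A \<in> topspace (finite_hyperspace X)" "openin (finite_hyperspace X) W" "A \<in> W" for A W
  proof -
    obtain V where V: "\<forall>a\<in>A. openin X (V a) \<and> a \<in> V a" "vietoris_basic X (V ` A) \<subseteq> W"
      using NB[OF AW(2)] AW(3) by blast
    have A: "finite A" "A \<noteq> {}" "A \<subseteq> topspace X" using FH_topspace_sub AW(1) by blast+
    define Bad where "Bad = (\<Union>a\<in>A. {B\<in>\<B>. a \<in> B \<and> \<not> B \<subseteq> V a})"
    have "finite Bad" using PR_fin[OF pr] V A(1) by (auto simp: Bad_def)
    then have "finite (rk \<B> ` Bad)" by simp
    then obtain N where N: "\<forall>k\<in>rk \<B> ` Bad. k < N" using finite_nat_set_iff_bounded by blast
    define M where "M = (\<Union>a\<in>A. {B\<in>\<B>. a \<in> B \<and> (\<forall>C\<in>\<B>. B \<subset> C \<longrightarrow> rk \<B> C < N)}) \<union> (\<lambda>a. {a}) ` A"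
    have fM: "finite M" using fin_lev[OF pr] A(1) by (auto simp: M_def)
    have "{D\<in>BB. A \<in> D \<and> D \<inter> (topspace (finite_hyperspace X) - W) \<noteq> {}} \<subseteq> (vietoris_basic X) ` Pow M"
    proof
      fix D assume D: "D \<in> {D\<in>BB. A \<in> D \<and> D \<inter> (topspace (finite_hyperspace X) - W) \<noteq> {}}"
      then have "D \<in> BB" by blast
      then obtain \<U> where U0: "D = vietoris_basic X \<U>" "\<U> \<subseteq> \<B>" "finite \<U>" "\<U> \<noteq> {}"
        "\<exists>l. \<forall>B\<in>\<U>. (\<exists>y. B = {y}) \<or> lev \<B> B l"
        unfolding BB_def by (elim CollectE exE conjE) (rule that; blast)
      then obtain l where "\<forall>B\<in>\<U>. (\<exists>y. B = {y}) \<or> lev \<B> B l" by blast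
      note U = U0(1-4) this
      have AU: "A \<subseteq> \<Union>\<U>" "\<forall>B\<in>\<U>. A \<inter> B \<noteq> {}" using D U(1) by (auto simp: vietoris_basic_def)
      show "D \<in> vietoris_basic X ` Pow M"
      proof (cases "N \<le> l")
        case True
        have sub: "B \<subseteq> V a" if "B \<in> \<U>" "a \<in> A" "a \<in> B" for B a
        proof -
          from U(5) \<open>B \<in> \<U>\<close> have "(\<exists>y. B = {y}) \<or> lev \<B> B l" by blast
          then show ?thesis
          proof
            assume "\<exists>y. B = {y}" then show ?thesis using V that by auto
          next
            assume "lev \<B> B l"
            then have "l \<le> rk \<B> B" unfolding lev_def by blast
            then have "N \<le> rk \<B> B" using True by linarith
            then have "B \<notin> Bad" using N by auto
            then show ?thesis using that U(2) Bad_def by auto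
          qed
        qed
        have "D \<subseteq> vietoris_basic X (V ` A)"
        proof
          fix C assume "C \<in> D"
          then have C: "finite C" "C \<noteq> {}" "C \<subseteq> topspace X" "C \<subseteq> \<Union>\<U>" "\<forall>B\<in>\<U>. C \<inter> B \<noteq> {}"
            using U(1) by (auto simp: vietoris_basic_def)
          have "C \<subseteq> \<Union>(V ` A)"
          proof
            fix c assume "c \<in> C"
            then obtain B where B: "B \<in> \<U>" "c \<in> B" using C by blast
            then obtain a where "a \<in> A" "a \<in> B" using AU by blast
            then show "c \<in> \<Union>(V ` A)" using sub B by blast
          qed
          moreover have "\<forall>a\<in>A. C \<inter> V a \<noteq> {}"
          proof
            fix a assume "a \<in> A"
            then obtain B where "B \<in> \<U>" "a \<in> B" using AU by blast
            then show "C \<inter> V a \<noteq> {}" using sub[of B a] C \<open>a \<in> A\<close> by blast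
          qed
          ultimately show "C \<in> vietoris_basic X (V ` A)" using C by (auto simp: vietoris_basic_def)
        qed
        then have "D \<subseteq> W" using V by auto
        then have False using D by auto
        then show ?thesis ..
      next
        case False
        have "\<U> \<subseteq> M"
        proof
          fix B assume "B \<in> \<U>"
          obtain a where a: "a \<in> A" "a \<in> B" using AU \<open>B \<in> \<U>\<close> by blast
          from U(5) \<open>B \<in> \<U>\<close> have "(\<exists>y. B = {y}) \<or> lev \<B> B l" by blast
          then show "B \<in> M"
          proof
            assume "\<exists>y. B = {y}" then show ?thesis using a by (auto simp: M_def)
          next
            assume "lev \<B> B l"
            then have "\<forall>C\<in>\<B>. B \<subset> C \<longrightarrow> rk \<B> C < N" using False by (auto simp: lev_def)
            then show ?thesis using a \<open>B \<in> \<U>\<close> U(2) by (auto simp: M_def)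
          qed
        qed
        then show ?thesis using U(1) by blast
      qed
    qed
    then show ?thesis using fM by (meson finite_Pow_iff finite_imageI finite_subset)
  qed
  show ?thesis unfolding has_point_regular_base_def point_regular_base_def using base pt by blast
qed

lemma backward:
  assumes pr: "point_regular_base (finite_hyperspace X) BB"
  shows "has_point_regular_base X"
proof -
  define pre where "pre D = {x\<in>topspace X. {x} \<in> D}" for D
  define \<B> where "\<B> = pre ` BB"
  have op: "\<forall>P\<in>\<B>. openin X P" using pre_open PR_open[OF pr] by (auto simp: \<B>_def pre_def)
  have loc: "\<exists>P\<in>\<B>. x \<in> P \<and> P \<subseteq> U" if "openin X U" "x \<in> U" for U x
  proof -
    have x: "x \<in> topspace X" using that openin_subset by blast
    have "openin (finite_hyperspace X) (vietoris_basic X {U})" by (rule open_viet) (use that in auto)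
    moreover have "{x} \<in> vietoris_basic X {U}" using that x by (auto simp: vietoris_basic_def)
    ultimately obtain D where D: "D \<in> BB" "{x} \<in> D" "D \<subseteq> vietoris_basic X {U}"
      using PR_base[OF pr] by blast
    then show ?thesis using x
      by (intro bexI[of _ "pre D"]) (auto simp: \<B>_def pre_def vietoris_basic_def)
  qed
  have base: "is_base X \<B>" unfolding is_base_def
  proof (intro conjI allI impI)
    show "\<forall>B\<in>\<B>. openin X B" using op .
    fix U assume U: "openin X U"
    show "\<exists>\<V>. \<V> \<subseteq> \<B> \<and> \<Union>\<V> = U"
      by (rule exI[of _ "{P\<in>\<B>. P \<subseteq> U}"]) (use loc[OF U] in blast)
  qed
  have pt: "finite {P\<in>\<B>. x \<in> P \<and> P \<inter> (topspace X - U) \<noteq> {}}"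
    if xU: "x \<in> topspace X" "openin X U" "x \<in> U" for x U
  proof -
    let ?W = "vietoris_basic X {U}"
    have W: "openin (finite_hyperspace X) ?W" by (rule open_viet) (use xU in auto)
    have xW: "{x} \<in> ?W" using xU by (auto simp: vietoris_basic_def)
    have "{x} \<in> topspace (finite_hyperspace X)" by (rule FH_single[OF xU(1)])
    then have fin: "finite {D\<in>BB. {x} \<in> D \<and> D \<inter> (topspace (finite_hyperspace X) - ?W) \<noteq> {}}"
      using pr W xW unfolding point_regular_base_def by blast
    have "{P\<in>\<B>. x \<in> P \<and> P \<inter> (topspace X - U) \<noteq> {}} \<subseteq>
          pre ` {D\<in>BB. {x} \<in> D \<and> D \<inter> (topspace (finite_hyperspace X) - ?W) \<noteq> {}}"
    proof
      fix P assume "P \<in> {P\<in>\<B>. x \<in> P \<and> P \<inter> (topspace X - U) \<noteq> {}}"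
      then obtain D y where D: "D \<in> BB" "P = pre D" "x \<in> P" "y \<in> P" "y \<notin> U"
        unfolding \<B>_def by blast
      then have "{x} \<in> D" "{y} \<in> D" "y \<in> topspace X" by (auto simp: pre_def)
      moreover have "{y} \<in> topspace (finite_hyperspace X)" by (rule FH_single[OF \<open>y \<in> topspace X\<close>])
      moreover have "{y} \<notin> ?W" using D(5) by (auto simp: vietoris_basic_def)
      ultimately show "P \<in> pre ` {D\<in>BB. {x} \<in> D \<and> D \<inter> (topspace (finite_hyperspace X) - ?W) \<noteq> {}}"
        using D(1,2) by blast
    qed
    then show ?thesis using fin by (meson finite_imageI finite_subset)
  qed
  show ?thesis unfolding has_point_regular_base_def point_regular_base_def using base pt by blast
qed

theorem theorem4p7:
  fixes X :: "'a topology"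
  assumes "regular_space X" and "Hausdorff_space X"
  shows "has_point_regular_base X \<longleftrightarrow> has_point_regular_base (finite_hyperspace X)"
  using forward[OF assms(2)] backward has_point_regular_base_def by metis

end
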